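(* Let $I=[a,b]$, $a=x_0<x_1<\cdots<x_N=b$, $I_n=[x_{n-1},x_n]$, $Y_0,\dots,Y_N\in\mathcal{K}(\mathbb{R})$, and let $L_n,\Omega_n$ ($n=1,\dots,N$) be as follows: $L_n:I\to I_n$ is a homeomorphism with $L_n(x_0)=x_{n-1}$, $L_n(x_N)=x_n$, $|L_n(x)-L_n(y)|\le\gamma_n|x-y|$ with $0<\gamma_n<1$; $\Omega_n:I\times\mathcal{K}(\mathbb{R})\to\mathcal{K}(\mathbb{R})$ is continuous with $\Omega_n(x_0,Y_0)=Y_{n-1}$, $\Omega_n(x_N,Y_N)=Y_n$ and $\mathfrak{H}(\Omega_n(x,Y),\Omega_n(x,Y_* ))\le\phi_n(\mathfrak{H}(Y,Y_* ))$ with $\phi_n:\mathbb{R}_+\to\mathbb{R}_+$ increasing and $\phi_n(t)/t<1$ decreasing for $t>0$. Let $\mathcal{J}$ be the IFS $\{I\times\mathcal{K}(\mathbb{R});\mathcal{W}_n(x,Y)=(L_n(x),\Omega_n(x,Y)),\ n=1,\dots,N\}$ with attractor the graph $\mathcal{G}_*(f)$ of the associated continuous fractal function $f:I\to\mathcal{K}(\mathbb{R})$. Let $p=(p_n)$ and $\tilde p=(\tilde p_n)$ be probability vectors with $p\ne\tilde p$, and let $\mu_p,\mu_{\tilde p}$ be the Borel probability measures on $\mathcal{G}_*(f)$ with $\mu_p=\sum_n p_n\mu_p\circ\mathcal{W}_n^{-1}$ and $\mu_{\tilde p}=\sum_n\tilde p_n\mu_{\tilde p}\circ\mathcal{W}_n^{-1}$.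 Then $\mu_p$ and $\mu_{\tilde p}$ are mutually singular.
   Context: $\mathcal{K}(\mathbb{R})$: non-empty compact subsets of $\mathbb{R}$ with Hausdorff distance $\mathfrak{H}$; $I\times\mathcal{K}(\mathbb{R})$ has metric $d((x,Y),(x_*,Y_* ))=|x-x_*|+\mathfrak{H}(Y,Y_* )$. The fractal function $f$ is the unique continuous $f:I\to\mathcal{K}(\mathbb{R})$ with $f(x_n)=Y_n$ and $f(x)=\Omega_n(L_n^{-1}(x),f(L_n^{-1}(x)))$ for $x\in I_n$; $\mathcal{G}_*(f)=\{(x,f(x)):x\in I\}$. *)

theory Defs
  imports "HOL-Analysis.Analysis" "HOL-Probability.Probability"
begin

definition hausdorff_dist :: "'a::metric_space set \<Rightarrow> 'a set \<Rightarrow> real" where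
  "hausdorff_dist A B = max (SUP a\<in>A. infdist a B) (SUP b\<in>B. infdist b A)"

lemma hd_bdd:
  fixes A B :: "'a::heine_borel set"
  assumes "compact A"
  shows "bdd_above ((\<lambda>a. infdist a B) ` A)"
proof -
  have "continuous_on A (\<lambda>a. infdist a B)"
    by (intro continuous_intros)
  then have "compact ((\<lambda>a. infdist a B) ` A)"
    using assms compact_continuous_image by blast
  then show ?thesis by (intro bounded_imp_bdd_above compact_imp_bounded)
qed

lemma hd_upper1:
  fixes A B :: "'a::heine_borel set"
  assumes "compact A" "a \<in> A"
  shows "infdist a B \<le> hausdorff_dist A B"
proof -
  have "infdist a B \<le> (SUP a\<in>A. infdist a B)"
    using assms hd_bdd by (intro cSUP_upper) auto
  then show ?thesis unfolding hausdorff_dist_def by linarith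
qed

lemma hd_upper2:
  fixes A B :: "'a::heine_borel set"
  assumes "compact B" "b \<in> B"
  shows "infdist b A \<le> hausdorff_dist A B"
proof -
  have "infdist b A \<le> (SUP b\<in>B. infdist b A)"
    using assms hd_bdd by (intro cSUP_upper) auto
  then show ?thesis unfolding hausdorff_dist_def by linarith
qed

lemma hd_least:
  fixes A B :: "'a::heine_borel set"
  assumes "A \<noteq> {}" "B \<noteq> {}" "\<And>a. a \<in> A \<Longrightarrow> infdist a B \<le> e"
    "\<And>b. b \<in> B \<Longrightarrow> infdist b A \<le> e"
  shows "hausdorff_dist A B \<le> e"
  unfolding hausdorff_dist_def using assms by (auto intro!: cSUP_least)

lemma hd_sym: "hausdorff_dist A B = hausdorff_dist B A"
  unfolding hausdorff_dist_def by simp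

lemma hd_nonneg:
  fixes A B :: "'a::heine_borel set"
  assumes "compact A" "A \<noteq> {}"
  shows "0 \<le> hausdorff_dist A B"
proof -
  obtain a where "a \<in> A" using assms by blast
  then show ?thesis using hd_upper1[OF assms(1)] infdist_nonneg order_trans by blast
qed

lemma hd_pt_tri:
  fixes A B C :: "'a::heine_borel set"
  assumes "compact C" "C \<noteq> {}"
  shows "infdist a B \<le> infdist a C + hausdorff_dist C B"
proof -
  obtain c where c: "c \<in> C" "infdist a C = dist a c"
    using infdist_attains_inf[of C a] assms compact_imp_closed by blast
  have "infdist a B \<le> infdist c B + dist a c" by (rule infdist_triangle)
  also have "infdist c B \<le> hausdorff_dist C B" using hd_upper1 assms c by blast
  finally show ?thesis using c by simp
qed

typedef kreal = "{S :: real set. S \<noteq> {} \<and> compact S}"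
  by (rule exI[of _ "{0}"]) auto

setup_lifting type_definition_kreal

instantiation kreal :: metric_space
begin

lift_definition dist_kreal :: "kreal \<Rightarrow> kreal \<Rightarrow> real" is hausdorff_dist .

definition uniformity_kreal :: "(kreal \<times> kreal) filter"
  where "uniformity_kreal = (INF e\<in>{0 <..}. principal {(x, y). dist x y < e})"

definition open_kreal :: "kreal set \<Rightarrow> bool"
  where "open_kreal S = (\<forall>x\<in>S. \<forall>\<^sub>F (x', y) in uniformity. x' = x \<longrightarrow> y \<in> S)"

instance
proof
  fix X Y Z :: kreal
  show "dist X Y = 0 \<longleftrightarrow> X = Y"
  proof transfer
    fix A B :: "real set"
    assume A: "A \<noteq> {} \<and> compact A" and B: "B \<noteq> {} \<and> compact B"
    show "hausdorff_dist A B = 0 \<longleftrightarrow> A = B"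
    proof
      assume h: "hausdorff_dist A B = 0"
      have "A \<subseteq> B"
      proof
        fix a assume "a \<in> A"
        then have "infdist a B = 0" using hd_upper1[of A a B] A h infdist_nonneg[of a B] by linarith
        then show "a \<in> B" using B in_closed_iff_infdist_zero compact_imp_closed by blast
      qed
      moreover have "B \<subseteq> A"
      proof
        fix b assume "b \<in> B"
        then have "infdist b A = 0" using hd_upper2[of B b A] B h infdist_nonneg[of b A] by linarith
        then show "b \<in> A" using A in_closed_iff_infdist_zero compact_imp_closed by blast
      qed
      ultimately show "A = B" by blast
    next
      assume "A = B"
      then show "hausdorff_dist A B = 0"
        unfolding hausdorff_dist_def using B by (simp add: cSUP_const)
    qed
  qed
  show "dist X Y \<le> dist X Z + dist Y Z"
  proof transfer
    fix A B C :: "real set"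
    assume A: "A \<noteq> {} \<and> compact A" and B: "B \<noteq> {} \<and> compact B" and C: "C \<noteq> {} \<and> compact C"
    show "hausdorff_dist A B \<le> hausdorff_dist A C + hausdorff_dist B C"
    proof (rule hd_least)
      fix a assume a: "a \<in> A"
      have "infdist a B \<le> infdist a C + hausdorff_dist C B" using hd_pt_tri C by blast
      also have "infdist a C \<le> hausdorff_dist A C" using hd_upper1 A a by blast
      finally show "infdist a B \<le> hausdorff_dist A C + hausdorff_dist B C" by (simp add: hd_sym)
    next
      fix b assume b: "b \<in> B"
      have "infdist b A \<le> infdist b C + hausdorff_dist C A" using hd_pt_tri C by blast
      also have "infdist b C \<le> hausdorff_dist B C" using hd_upper1 B b by blast
      finally show "infdist b A \<le> hausdorff_dist A C + hausdorff_dist B C" by (simp add: hd_sym)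
    qed (use A B in auto)
  qed
qed (rule open_kreal_def uniformity_kreal_def)+

end

end

theory Submission
  imports Defs
begin


locale ifs_setting =
  fixes a b :: real and N :: nat and x :: "nat \<Rightarrow> real" and L :: "nat \<Rightarrow> real \<Rightarrow> real"
  assumes N_pos: "0 < N" and x0: "x 0 = a" and xN: "x N = b"
    and x_incr: "\<forall>k<N. x k < x (Suc k)"
    and L_homeo: "\<forall>n\<in>{1..N}. \<exists>g. homeomorphism {a..b} {x (n - 1)..x n} (L n) g"
    and L_ends: "\<forall>n\<in>{1..N}. L n (x 0) = x (n - 1) \<and> L n (x N) = x n"
begin

lemma x_less: "i < j \<Longrightarrow> j \<le> N \<Longrightarrow> x i < x j"
proof (induction j)
  case 0 then show ?case by simp
next
  case (Suc j)
  then have "x j < x (Suc j)" using x_incr by simp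
  then show ?case using Suc by (cases "i = j") auto
qed

lemma x_le: "i \<le> j \<Longrightarrow> j \<le> N \<Longrightarrow> x i \<le> x j"
  using x_less by (cases "i = j") (auto intro: less_imp_le)

lemma ab: "a < b" using x_less[of 0 N] N_pos x0 xN by simp

lemma L_img: "n \<in> {1..N} \<Longrightarrow> L n ` {a..b} = {x (n - 1)..x n}"
  using L_homeo unfolding homeomorphism_def by blast

lemma L_inj: "n \<in> {1..N} \<Longrightarrow> s \<in> {a..b} \<Longrightarrow> t \<in> {a..b} \<Longrightarrow> L n s = L n t \<Longrightarrow> s = t"
  using L_homeo unfolding homeomorphism_def by metis

lemma L_b: "n \<in> {1..N} \<Longrightarrow> L n b = x n"
  using L_ends xN by auto

lemma L_range: "n \<in> {1..N} \<Longrightarrow> t \<in> {a..b} \<Longrightarrow> x (n - 1) \<le> L n t \<and> L n t \<le> x n"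
proof -
  assume "n \<in> {1..N}" "t \<in> {a..b}"
  then have "L n t \<in> L n ` {a..b}" by blast
  then show ?thesis using L_img[OF \<open>n \<in> {1..N}\<close>] by simp
qed

definition J :: "nat \<Rightarrow> real set" where
  "J n = {x (n - 1)..<x n} \<union> (if n = N then {x N} else {})"

lemma J_borel: "J n \<in> sets borel"
  unfolding J_def by auto

lemma J_sub: "n \<in> {1..N} \<Longrightarrow> J n \<subseteq> {x (n - 1)..x n}"
  unfolding J_def using x_le[of "n - 1" n] by auto

lemma J_sub_ab: "n \<in> {1..N} \<Longrightarrow> J n \<subseteq> {a..b}"
proof -
  assume n: "n \<in> {1..N}"
  have "a \<le> x (n - 1)" using x_le[of 0 "n - 1"] x0 n by auto
  moreover have "x n \<le> b" using x_le[of n N] xN n by auto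
  ultimately show ?thesis using J_sub[OF n] by auto
qed

lemma J_cover: "t \<in> {a..b} \<Longrightarrow> \<exists>n\<in>{1..N}. t \<in> J n"
proof -
  assume t: "t \<in> {a..b}"
  show ?thesis
  proof (cases "t = b")
    case True then show ?thesis using N_pos xN unfolding J_def by auto
  next
    case False
    then have tb: "t < x N" using t xN by auto
    define n where "n = (LEAST n. t < x n)"
    have n1: "t < x n" unfolding n_def by (rule LeastI[of _ N]) (rule tb)
    have n2: "n \<le> N" unfolding n_def by (rule Least_le) (rule tb)
    have n3: "n \<noteq> 0" using n1 x0 t by (cases n) auto
    have n4: "\<not> t < x (n - 1)" unfolding n_def
      by (rule not_less_Least) (use n3 n_def in auto)
    show ?thesis using n1 n2 n3 n4 unfolding J_def by (intro bexI[of _ n]) auto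
  qed
qed

lemma other_pre:
  assumes m: "m \<in> {1..N}" and n: "n \<in> {1..N}" and mn: "m \<noteq> n"
    and t: "t \<in> {a..b}" and Lt: "L m t \<in> J n"
  shows "t = b \<and> m < N"
proof (cases "m < n")
  case True
  have "L m t \<le> x m" using L_range[OF m t] by simp
  moreover have "x m \<le> x (n - 1)" using x_le[of m "n - 1"] True n by auto
  moreover have "x (n - 1) \<le> L m t" using Lt unfolding J_def using x_le[of "n-1" n] n by (auto split: if_splits)
  ultimately have "L m t = L m b" using L_b[OF m] by auto
  then have "t = b" using L_inj[OF m t] ab by auto
  then show ?thesis using True n by auto
next
  case False
  then have mn': "n < m" using mn by auto
  then have "n \<noteq> N" using m by auto
  then have "L m t < x n" using Lt unfolding J_def by auto
  moreover have "x n \<le> x (m - 1)" using x_le[of n "m - 1"] mn' m by auto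
  moreover have "x (m - 1) \<le> L m t" using L_range[OF m t] by simp
  ultimately show ?thesis by auto
qed

lemma b_pre:
  assumes m: "m \<in> {1..N}" and t: "t \<in> {a..b}" and Lt: "L m t = b"
  shows "t = b \<and> m = N"
proof (cases "m = N")
  case True
  then show ?thesis using L_inj[OF m t, of b] L_b[OF m] xN Lt ab by auto
next
  case False
  then have "x m < x N" using x_less[of m N] m by auto
  then show ?thesis using L_range[OF m t] Lt xN by auto
qed

lemma L_image_borel:
  assumes n: "n \<in> {1..N}" and E: "E \<in> sets borel" "E \<subseteq> {a..b}"
  shows "L n ` E \<in> sets borel"
proof -
  obtain g where g: "homeomorphism {a..b} {x (n - 1)..x n} (L n) g" using L_homeo n by blast
  define I where "I = {x (n - 1)..x n}"
  define h where "h = (\<lambda>s. if s \<in> I then g s else a)"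
  have hm: "h \<in> borel_measurable borel" unfolding h_def
    by (rule borel_measurable_continuous_on_if) (use g in \<open>auto simp: I_def homeomorphism_def\<close>)
  have "L n ` E = h -` E \<inter> I"
  proof
    show "L n ` E \<subseteq> h -` E \<inter> I"
    proof
      fix s assume "s \<in> L n ` E"
      then obtain t where t: "t \<in> E" "s = L n t" by blast
      then have "t \<in> {a..b}" using E by auto
      then have "s \<in> I" "g s = t" using g t unfolding homeomorphism_def I_def by auto
      then show "s \<in> h -` E \<inter> I" using t unfolding h_def by auto
    qed
    show "h -` E \<inter> I \<subseteq> L n ` E"
    proof
      fix s assume s: "s \<in> h -` E \<inter> I"
      then have "g s \<in> E" "L n (g s) = s" using g unfolding h_def I_def homeomorphism_def by auto
      then show "s \<in> L n ` E" by (metis image_eqI)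
    qed
  qed
  moreover have "h -` E \<inter> I \<in> sets borel"
    using measurable_sets[OF hm E(1)] I_def by auto
  ultimately show ?thesis by simp
qed

primrec cyl :: "nat list \<Rightarrow> real set" where
  "cyl [] = {a..b}"
| "cyl (n # w) = L n ` cyl w \<inter> J n"

definition W :: "nat \<Rightarrow> nat list set" where
  "W k = {w. set w \<subseteq> {1..N} \<and> length w = k}"

lemma W_finite: "finite (W k)"
  unfolding W_def by (rule finite_lists_length_eq) simp

lemma cyl_props: "set w \<subseteq> {1..N} \<Longrightarrow> cyl w \<in> sets borel \<and> cyl w \<subseteq> {a..b}"
proof (induction w)
  case Nil then show ?case by auto
next
  case (Cons n w)
  then have n: "n \<in> {1..N}" and IH: "cyl w \<in> sets borel" "cyl w \<subseteq> {a..b}" by auto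
  show ?case using L_image_borel[OF n IH] J_borel J_sub_ab[OF n] by auto
qed

lemma cyl_cover: "t \<in> {a..b} \<Longrightarrow> \<exists>w\<in>W k. t \<in> cyl w"
proof (induction k arbitrary: t)
  case 0 then show ?case unfolding W_def by auto
next
  case (Suc k)
  obtain n where n: "n \<in> {1..N}" "t \<in> J n" using J_cover Suc.prems by blast
  then have "t \<in> L n ` {a..b}" using J_sub L_img by blast
  then obtain s where s: "s \<in> {a..b}" "t = L n s" by blast
  obtain w where w: "w \<in> W k" "s \<in> cyl w" using Suc.IH[OF s(1)] by blast
  have "n # w \<in> W (Suc k)" using w n unfolding W_def by auto
  moreover have "t \<in> cyl (n # w)" using s w n by auto
  ultimately show ?case by blast
qed

lemma W_Suc: "W (Suc k) = (\<lambda>(n, w). n # w) ` ({1..N} \<times> W k)"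
proof
  show "W (Suc k) \<subseteq> (\<lambda>(n, w). n # w) ` ({1..N} \<times> W k)"
  proof
    fix v assume "v \<in> W (Suc k)"
    then obtain n w where "v = n # w" "n \<in> {1..N}" "w \<in> W k" unfolding W_def by (cases v) auto
    then show "v \<in> (\<lambda>(n, w). n # w) ` ({1..N} \<times> W k)" by force
  qed
qed (auto simp: W_def)

end


lemma fst_sets:
  fixes \<mu> :: "(real \<times> kreal) measure"
  assumes "sets \<mu> = sets borel" "B \<in> sets borel"
  shows "fst -` B \<in> sets \<mu>"
proof -
  have "(fst :: real \<times> kreal \<Rightarrow> real) \<in> borel_measurable borel"
    by (rule borel_measurable_continuous_onI) (intro continuous_intros)
  from measurable_sets[OF this assms(2)] show ?thesis using assms(1) by simp
qed

context ifs_setting begin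

lemma step_bound:
  fixes \<mu> :: "(real \<times> kreal) measure" and p :: "nat \<Rightarrow> real"
    and \<Omega> :: "nat \<Rightarrow> real \<Rightarrow> kreal \<Rightarrow> kreal" and f :: "real \<Rightarrow> kreal"
  assumes sets: "sets \<mu> = sets borel" and prob: "prob_space \<mu>"
    and pnn: "\<forall>n\<in>{1..N}. 0 \<le> p n"
    and inv: "\<forall>A\<in>sets borel. measure \<mu> A =
        (\<Sum>n=1..N. p n * measure \<mu> ((\<lambda>z. (L n (fst z), \<Omega> n (fst z) (snd z))) -` A
                                        \<inter> (\<lambda>t. (t, f t)) ` {a..b}))"
    and S: "S \<in> sets borel"
    and Q: "\<And>m. m \<in> {1..N} \<Longrightarrow> Q m \<in> sets borel \<and> {t\<in>{a..b}. L m t \<in> S} \<subseteq> Q m"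
  shows "measure \<mu> (fst -` S) \<le> (\<Sum>m=1..N. p m * measure \<mu> (fst -` Q m))"
proof -
  interpret prob_space \<mu> by (rule prob)
  have "fst -` S \<in> sets \<mu>" by (rule fst_sets[OF sets S])
  then have "(fst -` S :: (real \<times> kreal) set) \<in> sets borel" using sets by simp
  then have "measure \<mu> (fst -` S) = (\<Sum>m=1..N. p m * measure \<mu> ((\<lambda>z. (L m (fst z), \<Omega> m (fst z) (snd z))) -` (fst -` S)
                                        \<inter> (\<lambda>t. (t, f t)) ` {a..b}))"
    using inv by blast
  also have "\<dots> \<le> (\<Sum>m=1..N. p m * measure \<mu> (fst -` Q m))"
  proof (rule sum_mono)
    fix m assume m: "m \<in> {1..N}"
    have "(\<lambda>z. (L m (fst z), \<Omega> m (fst z) (snd z))) -` (fst -` S) \<inter> (\<lambda>t. (t, f t)) ` {a..b} \<subseteq> fst -` Q m"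
      using Q[OF m] by auto
    then have "measure \<mu> ((\<lambda>z. (L m (fst z), \<Omega> m (fst z) (snd z))) -` (fst -` S) \<inter> (\<lambda>t. (t, f t)) ` {a..b})
        \<le> measure \<mu> (fst -` Q m)"
      using finite_measure_mono fst_sets[OF sets] Q[OF m] by blast
    then show "p m * measure \<mu> ((\<lambda>z. (L m (fst z), \<Omega> m (fst z) (snd z))) -` (fst -` S) \<inter> (\<lambda>t. (t, f t)) ` {a..b})
        \<le> p m * measure \<mu> (fst -` Q m)"
      using pnn m by (simp add: mult_left_mono)
  qed
  finally show ?thesis .
qed

lemma atom_b:
  fixes \<mu> :: "(real \<times> kreal) measure" and p :: "nat \<Rightarrow> real"
    and \<Omega> :: "nat \<Rightarrow> real \<Rightarrow> kreal \<Rightarrow> kreal" and f :: "real \<Rightarrow> kreal"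
  assumes sets: "sets \<mu> = sets borel" and prob: "prob_space \<mu>"
    and pp: "(\<forall>n\<in>{1..N}. 0 \<le> p n) \<and> (\<Sum>n=1..N. p n) = 1"
    and inv: "\<forall>A\<in>sets borel. measure \<mu> A =
        (\<Sum>n=1..N. p n * measure \<mu> ((\<lambda>z. (L n (fst z), \<Omega> n (fst z) (snd z))) -` A
                                        \<inter> (\<lambda>t. (t, f t)) ` {a..b}))"
    and m: "m \<in> {1..N}" "m < N"
  shows "p m * measure \<mu> (fst -` {b}) = 0"
proof -
  interpret prob_space \<mu> by (rule prob)
  define Q where "Q = (\<lambda>k. if k = N then {b} else ({}::real set))"
  have "measure \<mu> (fst -` {b}) \<le> (\<Sum>k=1..N. p k * measure \<mu> (fst -` Q k))"
    by (rule step_bound[OF sets prob _ inv]) (use pp b_pre in \<open>auto simp: Q_def\<close>)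
  also have "\<dots> = (\<Sum>k=1..N. if k = N then p N * measure \<mu> (fst -` {b}) else 0)"
    by (rule sum.cong) (auto simp: Q_def)
  also have "\<dots> = p N * measure \<mu> (fst -` {b})"
    using N_pos by simp
  finally have le: "measure \<mu> (fst -` {b}) \<le> p N * measure \<mu> (fst -` {b})" .
  show ?thesis
  proof (cases "p m = 0")
    case False
    then have pm: "0 < p m" using pp m by force
    have "(\<Sum>n=1..N. p n) = (\<Sum>n\<in>{1..N} - {m, N}. p n) + p m + p N"
    proof -
      have "(\<Sum>n\<in>{1..N}. p n) = (\<Sum>n\<in>{1..N} - {N}. p n) + p N"
        using N_pos by (subst sum.remove[of _ N]) auto
      also have "(\<Sum>n\<in>{1..N} - {N}. p n) = (\<Sum>n\<in>{1..N} - {N} - {m}. p n) + p m"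
        using m by (subst sum.remove[of _ m]) auto
      finally show ?thesis by (simp add: set_diff_eq insert_commute Diff_insert2[symmetric] algebra_simps)
    qed
    moreover have "0 \<le> (\<Sum>n\<in>{1..N} - {m, N}. p n)" using pp by (intro sum_nonneg) auto
    ultimately have "p N < 1" using pp pm by linarith
    moreover have "0 \<le> measure \<mu> (fst -` {b})" by simp
    ultimately have "measure \<mu> (fst -` {b}) = 0" using le
      by (metis mult_less_cancel_right2 not_le order_antisym_conv)
    then show ?thesis by simp
  qed simp
qed

lemma cyl_step:
  fixes \<mu> :: "(real \<times> kreal) measure" and p :: "nat \<Rightarrow> real"
    and \<Omega> :: "nat \<Rightarrow> real \<Rightarrow> kreal \<Rightarrow> kreal" and f :: "real \<Rightarrow> kreal"
  assumes sets: "sets \<mu> = sets borel" and prob: "prob_space \<mu>"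
    and pp: "(\<forall>n\<in>{1..N}. 0 \<le> p n) \<and> (\<Sum>n=1..N. p n) = 1"
    and inv: "\<forall>A\<in>sets borel. measure \<mu> A =
        (\<Sum>n=1..N. p n * measure \<mu> ((\<lambda>z. (L n (fst z), \<Omega> n (fst z) (snd z))) -` A
                                        \<inter> (\<lambda>t. (t, f t)) ` {a..b}))"
    and n: "n \<in> {1..N}" and w: "set w \<subseteq> {1..N}"
  shows "measure \<mu> (fst -` cyl (n # w)) \<le> p n * measure \<mu> (fst -` cyl w)"
proof -
  interpret prob_space \<mu> by (rule prob)
  define Q where "Q = (\<lambda>k. if k = n then cyl w else if k < N then {b} else ({}::real set))"
  have cw: "cyl w \<in> sets borel" "cyl w \<subseteq> {a..b}" using cyl_props[OF w] by auto
  have "cyl (n # w) \<in> sets borel" using cyl_props[of "n # w"] w n by auto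
  then have "measure \<mu> (fst -` cyl (n # w)) \<le> (\<Sum>k=1..N. p k * measure \<mu> (fst -` Q k))"
  proof (rule step_bound[OF sets prob _ inv, rotated])
    fix k assume k: "k \<in> {1..N}"
    show "Q k \<in> sets borel \<and> {t \<in> {a..b}. L k t \<in> cyl (n # w)} \<subseteq> Q k"
    proof (cases "k = n")
      case True
      have "{t \<in> {a..b}. L k t \<in> cyl (n # w)} \<subseteq> cyl w"
        using True cw(2) L_inj[OF n] by (auto simp: subset_iff)
      moreover have "Q k = cyl w" using True Q_def by simp
      ultimately show ?thesis using cw(1) by simp
    next
      case False
      have "{t \<in> {a..b}. L k t \<in> cyl (n # w)} \<subseteq> Q k"
        using other_pre[OF k n False] False unfolding Q_def by auto
      then show ?thesis using False unfolding Q_def by auto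
    qed
  qed (use pp in auto)
  also have "\<dots> = (\<Sum>k=1..N. if k = n then p n * measure \<mu> (fst -` cyl w) else 0)"
  proof (rule sum.cong)
    fix k assume k: "k \<in> {1..N}"
    show "p k * measure \<mu> (fst -` Q k) = (if k = n then p n * measure \<mu> (fst -` cyl w) else 0)"
      using atom_b[OF sets prob pp inv k] unfolding Q_def by auto
  qed simp
  also have "\<dots> = p n * measure \<mu> (fst -` cyl w)" using n by simp
  finally show ?thesis .
qed

end


lemma geom_zero:
  fixes y \<rho> K :: real
  assumes "\<And>m. y \<le> \<rho> ^ m * K" "0 \<le> \<rho>" "\<rho> < 1"
  shows "y \<le> 0"
proof -
  have "(\<lambda>m. \<rho> ^ m * K) \<longlonglongrightarrow> 0 * K"
    by (intro tendsto_intros LIMSEQ_power_zero) (use assms in auto)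
  then show ?thesis using assms(1) by (intro LIMSEQ_le_const[of "\<lambda>m. \<rho> ^ m * K"]) auto
qed

lemma separate:
  fixes \<mu> \<nu> :: "(real \<times> kreal) measure" and Ak :: "nat \<Rightarrow> (real \<times> kreal) set"
  assumes sm: "sets \<mu> = sets borel" and sn: "sets \<nu> = sets borel"
    and pm: "prob_space \<mu>" and pn: "prob_space \<nu>"
    and Ak: "\<And>k. Ak k \<in> sets borel"
    and bm: "\<And>k. measure \<mu> (Ak k) \<le> \<rho> ^ k"
    and bn: "\<And>k. measure \<nu> (UNIV - Ak k) \<le> \<rho> ^ k"
    and r0: "0 \<le> \<rho>" and r1: "\<rho> < 1"
  shows "\<exists>A\<in>sets borel. emeasure \<mu> A = 0 \<and> emeasure \<nu> (UNIV - A) = 0"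
proof -
  define A where "A = (\<Inter>m. \<Union>k. Ak (k + m))"
  have Asets: "A \<in> sets borel" unfolding A_def using Ak by auto
  have geo: "summable (\<lambda>k. \<rho> ^ m * \<rho> ^ k)" for m
    by (intro summable_mult summable_geometric) (use r0 r1 in auto)
  have "measure \<mu> A = 0"
  proof -
    interpret prob_space \<mu> by (rule pm)
    have "measure \<mu> A \<le> \<rho> ^ m * (1 / (1 - \<rho>))" for m
    proof -
      have sA: "Ak k \<in> sets \<mu>" for k using Ak sm by simp
      have summ: "summable (\<lambda>k. measure \<mu> (Ak (k + m)))"
      proof (rule summable_comparison_test[OF _ geo[of m]])
        show "\<exists>N. \<forall>n\<ge>N. norm (measure \<mu> (Ak (n + m))) \<le> \<rho> ^ m * \<rho> ^ n"
          using bm by (metis measure_nonneg real_norm_def abs_of_nonneg power_add mult.commute)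
      qed
      have "measure \<mu> A \<le> measure \<mu> (\<Union>k. Ak (k + m))"
        by (rule finite_measure_mono) (use sA in \<open>auto simp: A_def\<close>)
      also have "\<dots> \<le> (\<Sum>k. measure \<mu> (Ak (k + m)))"
        by (rule finite_measure_subadditive_countably) (use sA summ in auto)
      also have "\<dots> \<le> (\<Sum>k. \<rho> ^ m * \<rho> ^ k)"
      proof (rule suminf_le)
        show "\<And>n. measure \<mu> (Ak (n + m)) \<le> \<rho> ^ m * \<rho> ^ n"
          using bm by (metis power_add mult.commute)
      qed (use summ geo in auto)
      also have "\<dots> = \<rho> ^ m * (1 / (1 - \<rho>))"
        using suminf_mult[OF summable_geometric[of \<rho>], of "\<rho> ^ m"] suminf_geometric[of \<rho>] r0 r1 by auto
      finally show ?thesis .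
    qed
    then have "measure \<mu> A \<le> 0" using geom_zero r0 r1 by blast
    then show ?thesis by (simp add: order_antisym)
  qed
  moreover have "measure \<nu> (UNIV - A) = 0"
  proof -
    interpret prob_space \<nu> by (rule pn)
    have sA: "Ak k \<in> sets \<nu>" for k using Ak sn by simp
    have sp: "space \<nu> = UNIV" using sets_eq_imp_space_eq[OF sn] by simp
    have sAc: "UNIV - Ak k \<in> sets \<nu>" for k using sets.compl_sets[OF sA[of k]] sp by simp
    define C where "C = (\<lambda>m. UNIV - (\<Union>k. Ak (k + m)))"
    have sC: "C m \<in> sets \<nu>" for m
    proof -
      have "(\<Union>k. Ak (k + m)) \<in> sets \<nu>" using sA by auto
      then have "space \<nu> - (\<Union>k. Ak (k + m)) \<in> sets \<nu>" by auto
      then show ?thesis unfolding C_def sp .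
    qed
    have C0: "measure \<nu> (C m) = 0" for m
    proof -
      have "measure \<nu> (C m) \<le> \<rho> ^ j * 1" for j
      proof -
        have "measure \<nu> (C m) \<le> measure \<nu> (UNIV - Ak (j + m))"
          by (rule finite_measure_mono) (use sAc in \<open>auto simp: C_def\<close>)
        also have "\<dots> \<le> \<rho> ^ (j + m)" by (rule bn)
        also have "\<dots> \<le> \<rho> ^ j" using r0 r1 by (simp add: power_add mult_left_le power_le_one)
        finally show ?thesis by simp
      qed
      then have "measure \<nu> (C m) \<le> 0" using geom_zero r0 r1 by blast
      then show ?thesis by (simp add: order_antisym)
    qed
    have "UNIV - A = (\<Union>m. C m)" unfolding A_def C_def by auto
    then have "measure \<nu> (UNIV - A) \<le> (\<Sum>m. measure \<nu> (C m))"
      using finite_measure_subadditive_countably[of C] sC C0 by auto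
    then show ?thesis using C0 by (simp add: order_antisym)
  qed
  moreover have "emeasure \<mu> A = ennreal (measure \<mu> A)"
    using finite_measure.emeasure_eq_measure[OF prob_space.finite_measure[OF pm]] by blast
  moreover have "emeasure \<nu> (UNIV - A) = ennreal (measure \<nu> (UNIV - A))"
    using finite_measure.emeasure_eq_measure[OF prob_space.finite_measure[OF pn]] by blast
  ultimately show ?thesis using Asets by auto
qed



lemma sqrt_le_self: "0 \<le> u \<Longrightarrow> u \<le> v \<Longrightarrow> u \<le> sqrt (u * v)"
proof -
  assume "0 \<le> u" "u \<le> v"
  then have "u * u \<le> u * v" by (simp add: mult_left_mono)
  then have "sqrt (u * u) \<le> sqrt (u * v)" by (rule real_sqrt_le_mono)
  then show ?thesis using \<open>0 \<le> u\<close> by simp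
qed

lemma sqrt_am_gm: "0 \<le> p \<Longrightarrow> 0 \<le> q \<Longrightarrow> sqrt (p * q) \<le> (p + q) / 2"
proof -
  assume "0 \<le> p" "0 \<le> q"
  have "0 \<le> (sqrt p - sqrt q)^2" by simp
  then have "2 * (sqrt p * sqrt q) \<le> sqrt p ^ 2 + sqrt q ^ 2" by (simp add: power2_diff)
  then show ?thesis using \<open>0 \<le> p\<close> \<open>0 \<le> q\<close> by (simp add: real_sqrt_mult)
qed

lemma sqrt_am_gm_strict: "0 \<le> p \<Longrightarrow> 0 \<le> q \<Longrightarrow> p \<noteq> q \<Longrightarrow> sqrt (p * q) < (p + q) / 2"
proof -
  assume "0 \<le> p" "0 \<le> q" "p \<noteq> q"
  then have "sqrt p \<noteq> sqrt q" by simp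
  then have "0 < (sqrt p - sqrt q)^2" by simp
  then have "2 * (sqrt p * sqrt q) < sqrt p ^ 2 + sqrt q ^ 2" by (simp add: power2_diff)
  then show ?thesis using \<open>0 \<le> p\<close> \<open>0 \<le> q\<close> by (simp add: real_sqrt_mult)
qed

context ifs_setting begin

lemma hellinger:
  fixes \<mu> \<nu> :: "(real \<times> kreal) measure" and p q :: "nat \<Rightarrow> real"
    and \<Omega> :: "nat \<Rightarrow> real \<Rightarrow> kreal \<Rightarrow> kreal" and f :: "real \<Rightarrow> kreal"
  assumes sm: "sets \<mu> = sets borel" and pm: "prob_space \<mu>"
    and pp: "(\<forall>n\<in>{1..N}. 0 \<le> p n) \<and> (\<Sum>n=1..N. p n) = 1"
    and im: "\<forall>A\<in>sets borel. measure \<mu> A =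
        (\<Sum>n=1..N. p n * measure \<mu> ((\<lambda>z. (L n (fst z), \<Omega> n (fst z) (snd z))) -` A
                                        \<inter> (\<lambda>t. (t, f t)) ` {a..b}))"
    and sn: "sets \<nu> = sets borel" and pn: "prob_space \<nu>"
    and qq: "(\<forall>n\<in>{1..N}. 0 \<le> q n) \<and> (\<Sum>n=1..N. q n) = 1"
    and iv: "\<forall>A\<in>sets borel. measure \<nu> A =
        (\<Sum>n=1..N. q n * measure \<nu> ((\<lambda>z. (L n (fst z), \<Omega> n (fst z) (snd z))) -` A
                                        \<inter> (\<lambda>t. (t, f t)) ` {a..b}))"
  shows "(\<Sum>w\<in>W k. sqrt (measure \<mu> (fst -` cyl w) * measure \<nu> (fst -` cyl w)))
           \<le> (\<Sum>n=1..N. sqrt (p n * q n)) ^ k"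
proof (induction k)
  case 0
  have "W 0 = {[]}" unfolding W_def by auto
  moreover have "measure \<mu> (fst -` {a..b}) \<le> 1" using prob_space.prob_le_1[OF pm] by blast
  moreover have "measure \<nu> (fst -` {a..b}) \<le> 1" using prob_space.prob_le_1[OF pn] by blast
  ultimately show ?case by (simp add: mult_le_one)
next
  case (Suc k)
  define F where "F = (\<lambda>w. sqrt (measure \<mu> (fst -` cyl w) * measure \<nu> (fst -` cyl w)))"
  define \<rho> where "\<rho> = (\<Sum>n=1..N. sqrt (p n * q n))"
  have inj: "inj_on (\<lambda>(n, w). n # w) ({1..N} \<times> W k)" by (auto simp: inj_on_def)
  have "(\<Sum>w\<in>W (Suc k). F w) = (\<Sum>(n, w)\<in>{1..N} \<times> W k. F (n # w))"
    unfolding W_Suc by (subst sum.reindex[OF inj]) (simp add: case_prod_unfold)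
  also have "\<dots> = (\<Sum>n\<in>{1..N}. \<Sum>w\<in>W k. F (n # w))"
    by (subst sum.cartesian_product) simp
  also have "\<dots> \<le> (\<Sum>n\<in>{1..N}. \<Sum>w\<in>W k. sqrt (p n * q n) * F w)"
  proof (intro sum_mono)
    fix n w assume n: "n \<in> {1..N}" and w: "w \<in> W k"
    have ws: "set w \<subseteq> {1..N}" using w unfolding W_def by auto
    have a1: "measure \<mu> (fst -` cyl (n # w)) \<le> p n * measure \<mu> (fst -` cyl w)"
      by (rule cyl_step[OF sm pm pp im n ws])
    have a2: "measure \<nu> (fst -` cyl (n # w)) \<le> q n * measure \<nu> (fst -` cyl w)"
      by (rule cyl_step[OF sn pn qq iv n ws])
    have "measure \<mu> (fst -` cyl (n # w)) * measure \<nu> (fst -` cyl (n # w))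
        \<le> (p n * measure \<mu> (fst -` cyl w)) * (q n * measure \<nu> (fst -` cyl w))"
      by (rule mult_mono[OF a1 a2]) (use pp n in auto)
    then have "F (n # w) \<le> sqrt ((p n * q n) * (measure \<mu> (fst -` cyl w) * measure \<nu> (fst -` cyl w)))"
      unfolding F_def by (rule real_sqrt_le_mono[THEN order_trans]) (simp add: algebra_simps)
    then show "F (n # w) \<le> sqrt (p n * q n) * F w" unfolding F_def by (simp add: real_sqrt_mult)
  qed
  also have "\<dots> = \<rho> * (\<Sum>w\<in>W k. F w)"
    unfolding \<rho>_def by (simp add: sum_distrib_left sum_distrib_right) (rule sum.swap)
  also have "\<dots> \<le> \<rho> * \<rho> ^ k"
  proof (rule mult_left_mono)
    show "(\<Sum>w\<in>W k. F w) \<le> \<rho> ^ k" using Suc.IH unfolding F_def \<rho>_def .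
    show "0 \<le> \<rho>" unfolding \<rho>_def using pp qq by (intro sum_nonneg) auto
  qed
  finally show ?case unfolding F_def \<rho>_def by simp
qed

end


theorem theorem3p4:
  fixes a b :: real and N :: nat and x :: "nat \<Rightarrow> real"
    and Y :: "nat \<Rightarrow> kreal"
    and L :: "nat \<Rightarrow> real \<Rightarrow> real" and \<gamma> :: "nat \<Rightarrow> real"
    and \<Omega> :: "nat \<Rightarrow> real \<Rightarrow> kreal \<Rightarrow> kreal" and \<phi> :: "nat \<Rightarrow> real \<Rightarrow> real"
    and f :: "real \<Rightarrow> kreal"
    and p q :: "nat \<Rightarrow> real"
    and \<mu> \<nu> :: "(real \<times> kreal) measure"
  assumes N_pos: "0 < N"
    and x_ends: "x 0 = a" "x N = b"
    and x_incr: "\<forall>k<N. x k < x (Suc k)"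
    and L_homeo: "\<forall>n\<in>{1..N}. \<exists>g. homeomorphism {a..b} {x (n - 1)..x n} (L n) g"
    and L_ends: "\<forall>n\<in>{1..N}. L n (x 0) = x (n - 1) \<and> L n (x N) = x n"
    and L_contr: "\<forall>n\<in>{1..N}. 0 < \<gamma> n \<and> \<gamma> n < 1 \<and>
                    (\<forall>s\<in>{a..b}. \<forall>t\<in>{a..b}. \<bar>L n s - L n t\<bar> \<le> \<gamma> n * \<bar>s - t\<bar>)"
    and \<Omega>_cont: "\<forall>n\<in>{1..N}. continuous_on ({a..b} \<times> UNIV) (\<lambda>z. \<Omega> n (fst z) (snd z))"
    and \<Omega>_ends: "\<forall>n\<in>{1..N}. \<Omega> n (x 0) (Y 0) = Y (n - 1) \<and> \<Omega> n (x N) (Y N) = Y n"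
    and \<Omega>_contr: "\<forall>n\<in>{1..N}. \<forall>s\<in>{a..b}. \<forall>U V. dist (\<Omega> n s U) (\<Omega> n s V) \<le> \<phi> n (dist U V)"
    and \<phi>_nonneg: "\<forall>n\<in>{1..N}. \<forall>t\<ge>0. 0 \<le> \<phi> n t"
    and \<phi>_mono: "\<forall>n\<in>{1..N}. mono_on {0..} (\<phi> n)"
    and \<phi>_ratio_less: "\<forall>n\<in>{1..N}. \<forall>t>0. \<phi> n t / t < 1"
    and \<phi>_ratio_decr: "\<forall>n\<in>{1..N}. \<forall>s t. 0 < s \<and> s \<le> t \<longrightarrow> \<phi> n t / t \<le> \<phi> n s / s"
    and f_cont: "continuous_on {a..b} f"
    and f_interp: "\<forall>k\<le>N. f (x k) = Y k"
    and f_fix: "\<forall>n\<in>{1..N}. \<forall>t\<in>{a..b}. f (L n t) = \<Omega> n t (f t)"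
    and p_prob: "(\<forall>n\<in>{1..N}. 0 \<le> p n) \<and> (\<Sum>n=1..N. p n) = 1"
    and q_prob: "(\<forall>n\<in>{1..N}. 0 \<le> q n) \<and> (\<Sum>n=1..N. q n) = 1"
    and p_ne_q: "\<exists>n\<in>{1..N}. p n \<noteq> q n"
    and \<mu>_borel: "sets \<mu> = sets borel" and \<mu>_prob: "prob_space \<mu>"
    and \<mu>_supp: "emeasure \<mu> ((\<lambda>t. (t, f t)) ` {a..b}) = 1"
    and \<mu>_inv: "\<forall>A\<in>sets borel. measure \<mu> A =
        (\<Sum>n=1..N. p n * measure \<mu> ((\<lambda>z. (L n (fst z), \<Omega> n (fst z) (snd z))) -` A
                                        \<inter> (\<lambda>t. (t, f t)) ` {a..b}))"
    and \<nu>_borel: "sets \<nu> = sets borel" and \<nu>_prob: "prob_space \<nu>"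
    and \<nu>_supp: "emeasure \<nu> ((\<lambda>t. (t, f t)) ` {a..b}) = 1"
    and \<nu>_inv: "\<forall>A\<in>sets borel. measure \<nu> A =
        (\<Sum>n=1..N. q n * measure \<nu> ((\<lambda>z. (L n (fst z), \<Omega> n (fst z) (snd z))) -` A
                                        \<inter> (\<lambda>t. (t, f t)) ` {a..b}))"
  shows "\<exists>A\<in>sets borel. emeasure \<mu> A = 0 \<and> emeasure \<nu> (UNIV - A) = 0"
proof -
  interpret S: ifs_setting a b N x L
    by unfold_locales (use N_pos x_ends x_incr L_homeo L_ends in auto)
  define \<rho> where "\<rho> = (\<Sum>n=1..N. sqrt (p n * q n))"
  have r0: "0 \<le> \<rho>" unfolding \<rho>_def using p_prob q_prob by (intro sum_nonneg) auto
  have "\<rho> < (\<Sum>n=1..N. (p n + q n) / 2)" unfolding \<rho>_def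
  proof (rule sum_strict_mono_ex1)
    show "\<forall>n\<in>{1..N}. sqrt (p n * q n) \<le> (p n + q n) / 2"
      using p_prob q_prob sqrt_am_gm by auto
    show "\<exists>n\<in>{1..N}. sqrt (p n * q n) < (p n + q n) / 2"
      using p_ne_q p_prob q_prob sqrt_am_gm_strict by blast
  qed simp
  also have "\<dots> = 1" using p_prob q_prob by (simp add: sum_divide_distrib[symmetric] sum.distrib)
  finally have r1: "\<rho> < 1" .
  define M1 where "M1 = (\<lambda>w. measure \<mu> (fst -` S.cyl w))"
  define M2 where "M2 = (\<lambda>w. measure \<nu> (fst -` S.cyl w))"
  define Ak :: "nat \<Rightarrow> (real \<times> kreal) set" where "Ak = (\<lambda>k. \<Union>w\<in>{w\<in>S.W k. M1 w \<le> M2 w}. fst -` S.cyl w)"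
  have H: "(\<Sum>w\<in>S.W k. sqrt (M1 w * M2 w)) \<le> \<rho> ^ k" for k
    unfolding M1_def M2_def \<rho>_def
    by (rule S.hellinger[OF \<mu>_borel \<mu>_prob p_prob \<mu>_inv \<nu>_borel \<nu>_prob q_prob \<nu>_inv])
  have Hnn: "0 \<le> sqrt (M1 w * M2 w)" for w unfolding M1_def M2_def by simp
  have cylS: "w \<in> S.W k \<Longrightarrow> fst -` S.cyl w \<in> sets (borel :: (real \<times> kreal) measure)" for w k
    using S.cyl_props fst_sets[OF refl, of "S.cyl w"] unfolding S.W_def by auto
  have Akb: "Ak k \<in> sets borel" for k
    unfolding Ak_def using cylS S.W_finite by (intro sets.finite_UN) auto
  have bm: "measure \<mu> (Ak k) \<le> \<rho> ^ k" for k
  proof -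
    interpret prob_space \<mu> by (rule \<mu>_prob)
    have "measure \<mu> (Ak k) \<le> (\<Sum>w\<in>{w\<in>S.W k. M1 w \<le> M2 w}. M1 w)"
      unfolding Ak_def M1_def
      by (rule finite_measure_subadditive_finite) (use S.W_finite cylS \<mu>_borel in auto)
    also have "\<dots> \<le> (\<Sum>w\<in>{w\<in>S.W k. M1 w \<le> M2 w}. sqrt (M1 w * M2 w))"
      by (rule sum_mono) (auto intro!: sqrt_le_self simp: M1_def)
    also have "\<dots> \<le> (\<Sum>w\<in>S.W k. sqrt (M1 w * M2 w))"
      by (rule sum_mono2) (use S.W_finite Hnn in auto)
    finally show ?thesis using H[of k] by simp
  qed
  have bn: "measure \<nu> (UNIV - Ak k) \<le> \<rho> ^ k" for k
  proof -
    interpret prob_space \<nu> by (rule \<nu>_prob)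
    define G where "G = (\<lambda>t. (t, f t)) ` {a..b}"
    have sp: "space \<nu> = UNIV" using sets_eq_imp_space_eq[OF \<nu>_borel] by simp
    have Gs: "G \<in> sets \<nu>" using \<nu>_supp emeasure_notin_sets unfolding G_def by fastforce
    have "measure \<nu> G = 1" using \<nu>_supp emeasure_eq_measure unfolding G_def by simp
    then have G0: "measure \<nu> (UNIV - G) = 0" using prob_compl[OF Gs] sp by simp
    define Bad :: "(real \<times> kreal) set" where "Bad = (\<Union>w\<in>{w\<in>S.W k. \<not> M1 w \<le> M2 w}. fst -` S.cyl w)"
    have Bads: "Bad \<in> sets \<nu>"
      unfolding Bad_def using cylS S.W_finite \<nu>_borel by (intro sets.finite_UN) auto
    have Gc: "UNIV - G \<in> sets \<nu>" using sets.compl_sets[OF Gs] sp by simp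
    have "UNIV - Ak k \<subseteq> (UNIV - G) \<union> Bad"
    proof
      fix z assume z: "z \<in> UNIV - Ak k"
      show "z \<in> (UNIV - G) \<union> Bad"
      proof (cases "z \<in> G")
        case True
        then have "fst z \<in> {a..b}" unfolding G_def by auto
        then obtain w where w: "w \<in> S.W k" "fst z \<in> S.cyl w" using S.cyl_cover by blast
        then have "\<not> M1 w \<le> M2 w" using z unfolding Ak_def by auto
        then show ?thesis using w unfolding Bad_def by auto
      qed simp
    qed
    then have "measure \<nu> (UNIV - Ak k) \<le> measure \<nu> ((UNIV - G) \<union> Bad)"
      using Gc Bads by (intro finite_measure_mono) auto
    also have "\<dots> \<le> measure \<nu> (UNIV - G) + measure \<nu> Bad"
      using Gc Bads by (intro measure_Un_le) auto
    also have "measure \<nu> Bad \<le> (\<Sum>w\<in>{w\<in>S.W k. \<not> M1 w \<le> M2 w}. M2 w)"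
      unfolding Bad_def M2_def
      by (rule finite_measure_subadditive_finite) (use S.W_finite cylS \<nu>_borel in auto)
    also have "\<dots> \<le> (\<Sum>w\<in>{w\<in>S.W k. \<not> M1 w \<le> M2 w}. sqrt (M1 w * M2 w))"
    proof (rule sum_mono)
      fix w assume "w \<in> {w\<in>S.W k. \<not> M1 w \<le> M2 w}"
      then have "M2 w \<le> sqrt (M2 w * M1 w)" by (intro sqrt_le_self) (auto simp: M2_def)
      then show "M2 w \<le> sqrt (M1 w * M2 w)" by (simp add: mult.commute)
    qed
    also have "\<dots> \<le> (\<Sum>w\<in>S.W k. sqrt (M1 w * M2 w))"
      by (rule sum_mono2) (use S.W_finite Hnn in auto)
    finally show ?thesis using H[of k] G0 by simp
  qed
  show ?thesis
    by (rule separate[OF \<mu>_borel \<nu>_borel \<mu>_prob \<nu>_prob Akb bm bn r0 r1])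
qed

end
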